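(* Consider the Bregman proximal augmented Lagrangian method described in the context, with $\psi,\phi$ Legendre and $g=\delta_{-\mathcal{C}}$ for a closed convex cone $\mathcal{C}\subseteq\mathbb{R}^m$ whose dual cone satisfies $\mathcal{C}^*\subseteq\operatorname{dom}\phi$. Let $(x^\star,y^\star)$ be a saddle point of $L$ with $x^\star\in\operatorname{dom}\psi$, $y^\star\in\operatorname{dom}\phi$, and let $R:=2\|y^\star\|+1$. Then for every $K\ge0$, with $\breve s^K=\frac{\sum_{k=0}^K\sigma_ks^k}{\sum_{k=0}^K\sigma_k}$, $$\max\Big\{|f(\breve s^K)-f(x^\star)|,\ \operatorname{dist}(\mathcal{A}(\breve s^K),-\mathcal{C})\Big\}\le\frac{1}{\sum_{k=0}^K\sigma_k}\Big(D_\psi(x^\star,x^0)+\sup_{y\in\mathcal{C}^*\cap B_R}D_\phi(y,y^0)\Big).$$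
   Context: Let $f\in\Gamma_0(\mathbb{R}^n)$, $g\in\Gamma_0(\mathbb{R}^m)$ (proper lsc convex), $A\in\mathbb{R}^{m\times n}$, $b\in\mathbb{R}^m$, $\mathcal{A}(x)=Ax-b$. $L(x,y)=f(x)+\langle\mathcal{A}(x),y\rangle-g^*(y)$; KKT operator $T(x,y)=(\partial f(x)+A^\top y)\times(\partial g^*(y)+b-Ax)$ (maximal monotone). $\delta_S$ is the indicator function of a set $S$; the dual cone is $\mathcal{C}^*=\{y:\langle y,c\rangle\ge0\ \forall c\in\mathcal{C}\}$, so $g^*=\delta_{\mathcal{C}^*}$; $\operatorname{dist}$ is Euclidean distance and $B_R$ the closed ball of radius $R$ at $0$. A function $h\in\Gamma_0$ is Legendre if essentially smooth ($\operatorname{int}\operatorname{dom}h\ne\emptyset$, differentiable there, $\|\nabla h(z^\nu)\|\to\infty$ whenever $\operatorname{int}\operatorname{dom}h\ni z^\nu\to z\in\operatorname{bdry}\operatorname{dom}h$) and essentially strictly convex (strictly convex on every convex subset of $\operatorname{dom}\partial h$); $\nabla h^*$ is the inverse of $\nabla h$ on interiors of domains. $D_h(a,c)=h(a)-h(c)-\langle\nabla h(c),a-c\rangle$ for $a\in\operatorname{dom}h$, $c\in\operatorname{int}\operatorname{dom}h$, $+\infty$ otherwise. Let $\psi\in\Gamma_0(\mathbb{R}^n)$, $\phi\in\Gamma_0(\mathbb{R}^m)$ be Legendre, $\Phi(x,y)=\psi(x)+\phi(y)$, and assume $\operatorname{int}\operatorname{dom}\Phi\cap\operatorname{dom}T\ne\emptyset$.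 Bregman proximal augmented Lagrangian method: given $x^0\in\operatorname{int}\operatorname{dom}\psi$, $y^0\in\operatorname{int}\operatorname{dom}\phi$, step sizes $\sigma_k\ge\sigma>0$ and $\rho_k\in[0,1)$, it generates $s^k\in\operatorname{dom}\psi$, $x^{k+1},y^{k+1},v^k,u^k$ with $(v^k,u^k)\in T(s^k,y^{k+1})$, $x^{k+1}=\nabla\psi^*(\nabla\psi(x^k)-\sigma_kv^k)\in\operatorname{int}\operatorname{dom}\psi$, $y^{k+1}=\nabla\phi^*(\nabla\phi(y^k)-\sigma_ku^k)\in\operatorname{int}\operatorname{dom}\phi$, and $D_\psi(s^k,x^{k+1})\le\rho_k\big(D_\psi(s^k,x^k)+D_\phi(y^{k+1},y^k)\big)$. *)

theory Defs
  imports "HOL-Analysis.Analysis"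
begin

(* Extended-real-valued functions on a Euclidean space; +\<infinity> encodes "outside the domain". *)

definition edom :: "('a \<Rightarrow> ereal) \<Rightarrow> 'a set" where
  "edom h = {x. h x < \<infinity>}"

definition eproper :: "('a \<Rightarrow> ereal) \<Rightarrow> bool" where
  "eproper h \<longleftrightarrow> (\<forall>x. h x \<noteq> -\<infinity>) \<and> (\<exists>x. h x < \<infinity>)"

definition econvex :: "('a::real_vector \<Rightarrow> ereal) \<Rightarrow> bool" where
  "econvex h \<longleftrightarrow> convex {(x, t::real). h x \<le> ereal t}"

definition elsc :: "('a::metric_space \<Rightarrow> ereal) \<Rightarrow> bool" where
  "elsc h \<longleftrightarrow> (\<forall>x X. X \<longlonglongrightarrow> x \<longrightarrow> h x \<le> liminf (\<lambda>k. h (X k)))"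

definition Gamma0 :: "('a::real_normed_vector \<Rightarrow> ereal) \<Rightarrow> bool" where
  "Gamma0 h \<longleftrightarrow> eproper h \<and> elsc h \<and> econvex h"

definition eindicator :: "'a set \<Rightarrow> 'a \<Rightarrow> ereal" where
  "eindicator S x = (if x \<in> S then 0 else \<infinity>)"

definition econj :: "('a::real_inner \<Rightarrow> ereal) \<Rightarrow> 'a \<Rightarrow> ereal" where
  "econj h y = (SUP x. ereal (inner x y) - h x)"

definition esubdiff :: "('a::real_inner \<Rightarrow> ereal) \<Rightarrow> 'a \<Rightarrow> 'a set" where
  "esubdiff h x = {v. h x \<noteq> \<infinity> \<and> h x \<noteq> -\<infinity> \<and>
                      (\<forall>z. h z \<ge> h x + ereal (inner v (z - x)))}"

definition dual_cone :: "'a::real_inner set \<Rightarrow> 'a set" where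
  "dual_cone C = {y. \<forall>c\<in>C. inner y c \<ge> 0}"

(* gradient of h at z (meaningful where the finite part of h is differentiable) *)
definition egrad :: "('a::real_inner \<Rightarrow> ereal) \<Rightarrow> 'a \<Rightarrow> 'a" where
  "egrad h z = (THE D. GDERIV (\<lambda>w. real_of_ereal (h w)) z :> D)"

definition essentially_smooth :: "('a::euclidean_space \<Rightarrow> ereal) \<Rightarrow> bool" where
  "essentially_smooth h \<longleftrightarrow>
     interior (edom h) \<noteq> {} \<and>
     (\<forall>z\<in>interior (edom h). \<exists>D. GDERIV (\<lambda>w. real_of_ereal (h w)) z :> D) \<and>
     (\<forall>Z z. (\<forall>k. Z k \<in> interior (edom h)) \<longrightarrow> Z \<longlonglongrightarrow> z \<longrightarrow> z \<in> frontier (edom h) \<longrightarrow>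
            filterlim (\<lambda>k. norm (egrad h (Z k))) at_top sequentially)"

definition strictly_convex_on_e :: "'a::real_vector set \<Rightarrow> ('a \<Rightarrow> ereal) \<Rightarrow> bool" where
  "strictly_convex_on_e S h \<longleftrightarrow>
     (\<forall>x\<in>S. \<forall>y\<in>S. \<forall>t::real. x \<noteq> y \<longrightarrow> 0 < t \<longrightarrow> t < 1 \<longrightarrow>
        h (t *\<^sub>R x + (1 - t) *\<^sub>R y) < ereal t * h x + ereal (1 - t) * h y)"

definition essentially_strictly_convex :: "('a::real_inner \<Rightarrow> ereal) \<Rightarrow> bool" where
  "essentially_strictly_convex h \<longleftrightarrow>
     (\<forall>S. convex S \<longrightarrow> S \<subseteq> {x. esubdiff h x \<noteq> {}} \<longrightarrow> strictly_convex_on_e S h)"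

definition Legendre :: "('a::euclidean_space \<Rightarrow> ereal) \<Rightarrow> bool" where
  "Legendre h \<longleftrightarrow> Gamma0 h \<and> essentially_smooth h \<and> essentially_strictly_convex h"

definition bregman :: "('a::euclidean_space \<Rightarrow> ereal) \<Rightarrow> 'a \<Rightarrow> 'a \<Rightarrow> ereal" where
  "bregman h a c =
     (if a \<in> edom h \<and> c \<in> interior (edom h)
      then h a - h c - ereal (inner (egrad h c) (a - c)) else \<infinity>)"

definition lagr :: "(real^'n \<Rightarrow> ereal) \<Rightarrow> (real^'m \<Rightarrow> ereal) \<Rightarrow> real^'n^'m \<Rightarrow> real^'m
                    \<Rightarrow> real^'n \<Rightarrow> real^'m \<Rightarrow> ereal" where
  "lagr f g A b x y = f x + ereal (inner (A *v x - b) y) - econj g y"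

definition saddle_point :: "(real^'n \<Rightarrow> ereal) \<Rightarrow> (real^'m \<Rightarrow> ereal) \<Rightarrow> real^'n^'m \<Rightarrow> real^'m
                    \<Rightarrow> real^'n \<Rightarrow> real^'m \<Rightarrow> bool" where
  "saddle_point f g A b xs ys \<longleftrightarrow>
     (\<forall>x y. lagr f g A b xs y \<le> lagr f g A b xs ys \<and> lagr f g A b xs ys \<le> lagr f g A b x ys)"

definition kkt :: "(real^'n \<Rightarrow> ereal) \<Rightarrow> (real^'m \<Rightarrow> ereal) \<Rightarrow> real^'n^'m \<Rightarrow> real^'m
                    \<Rightarrow> real^'n \<Rightarrow> real^'m \<Rightarrow> ((real^'n) \<times> (real^'m)) set" where
  "kkt f g A b x y =
     {(p + transpose A *v y, q + b - A *v x) | p q. p \<in> esubdiff f x \<and> q \<in> esubdiff (econj g) y}"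

end

theory Submission imports Defs begin


lemma ereal_le_real: "h \<le> ereal r \<Longrightarrow> h \<noteq> -\<infinity> \<Longrightarrow> real_of_ereal h \<le> r"
  by (cases h) auto

lemma edom_fin: assumes "eproper h" "x \<in> edom h" shows "h x = ereal (real_of_ereal (h x))"
  using assms unfolding eproper_def edom_def by (cases "h x") auto

lemma grad_ineq:
  fixes h :: "'a::real_inner \<Rightarrow> ereal"
  assumes pr: "eproper h" and cv: "econvex h" and c: "c \<in> edom h"
    and D: "GDERIV (\<lambda>w. real_of_ereal (h w)) c :> D" and a: "a \<in> edom h"
  shows "real_of_ereal (h c) + inner D (a - c) \<le> real_of_ereal (h a)"
proof -
  define hr where "hr = (\<lambda>w. real_of_ereal (h w))"
  define g where "g = (\<lambda>t::real. hr (c + t *\<^sub>R (a - c)))"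
  have hc: "h c = ereal (hr c)" using edom_fin[OF pr c] hr_def by simp
  have ha: "h a = ereal (hr a)" using edom_fin[OF pr a] hr_def by simp
  have E: "convex {(x, t::real). h x \<le> ereal t}" using cv unfolding econvex_def .
  have ineq: "g t \<le> (1 - t) * hr c + t * hr a" if "0 \<le> t" "t \<le> 1" for t
  proof -
    have "(1 - t) *\<^sub>R (c, hr c) + t *\<^sub>R (a, hr a) \<in> {(x, t::real). h x \<le> ereal t}"
      by (rule convexD[OF E]) (use that hc ha in auto)
    then have "h ((1 - t) *\<^sub>R c + t *\<^sub>R a) \<le> ereal ((1 - t) * hr c + t * hr a)" by simp
    moreover have "(1 - t) *\<^sub>R c + t *\<^sub>R a = c + t *\<^sub>R (a - c)" by (simp add: algebra_simps)
    ultimately show ?thesis unfolding g_def hr_def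
      using pr unfolding eproper_def by (intro ereal_le_real) auto
  qed
  have d1: "((\<lambda>t::real. c + t *\<^sub>R (a - c)) has_derivative (\<lambda>t. t *\<^sub>R (a - c))) (at 0 within {0<..})"
    by (auto intro!: derivative_eq_intros)
  have d2: "(hr has_derivative (\<lambda>k. inner k D)) (at (c + 0 *\<^sub>R (a - c)))"
    using D unfolding gderiv_def hr_def by simp
  have "(g has_derivative (\<lambda>t. inner (t *\<^sub>R (a - c)) D)) (at 0 within {0<..})"
    unfolding g_def by (rule has_derivative_compose[OF d1 d2])
  then have "(g has_field_derivative inner (a - c) D) (at 0 within {0<..})"
    unfolding has_field_derivative_def by (simp add: mult.commute[of _ "inner (a - c) D"])
  then have lim: "((\<lambda>t. (g t - g 0) / (t - 0)) \<longlongrightarrow> inner (a - c) D) (at 0 within {0<..})"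
    using has_field_derivative_iff by blast
  have ev: "eventually (\<lambda>t. (g t - g 0) / (t - 0) \<le> hr a - hr c) (at 0 within {0<..})"
  proof -
    have "eventually (\<lambda>t::real. t \<in> {0<..<1}) (at_right 0)"
      by (rule eventually_at_right_real) simp
    then show ?thesis
    proof (rule eventually_mono)
      fix t :: real assume t: "t \<in> {0<..<1}"
      have g0: "g 0 = hr c" unfolding g_def by simp
      have "g t - g 0 \<le> t * (hr a - hr c)" using ineq[of t] t g0 by (simp add: algebra_simps)
      then show "(g t - g 0) / (t - 0) \<le> hr a - hr c" using t by (simp add: divide_simps mult.commute)
    qed
  qed
  have "inner (a - c) D \<le> hr a - hr c"
    by (rule tendsto_upperbound[OF lim ev]) simp
  then show ?thesis unfolding hr_def by (simp add: inner_commute)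
qed

lemma egrad_gderiv:
  assumes "essentially_smooth h" "c \<in> interior (edom h)"
  shows "GDERIV (\<lambda>w. real_of_ereal (h w)) c :> egrad h c"
proof -
  obtain D where D: "GDERIV (\<lambda>w. real_of_ereal (h w)) c :> D"
    using assms unfolding essentially_smooth_def by blast
  have uniq: "D' = D" if "GDERIV (\<lambda>w. real_of_ereal (h w)) c :> D'" for D'
  proof -
    have "(\<lambda>k. inner k D') = (\<lambda>k. inner k D)"
      using has_derivative_unique that D unfolding gderiv_def by blast
    then have "inner (D' - D) D' = inner (D' - D) D" by metis
    then have "inner (D' - D) (D' - D) = 0" by (simp add: inner_diff_right)
    then show ?thesis by simp
  qed
  have "egrad h c = D" unfolding egrad_def
    using D uniq by (rule the_equality)
  then show ?thesis using D by simp
qed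

lemma bregman_eq:
  assumes L: "Legendre h" and a: "a \<in> edom h" and c: "c \<in> interior (edom h)"
  shows "bregman h a c = ereal (real_of_ereal (h a) - real_of_ereal (h c) - inner (egrad h c) (a - c))"
    and "0 \<le> real_of_ereal (h a) - real_of_ereal (h c) - inner (egrad h c) (a - c)"
proof -
  have pr: "eproper h" and cv: "econvex h" and sm: "essentially_smooth h"
    using L unfolding Legendre_def Gamma0_def by auto
  have c': "c \<in> edom h" using c interior_subset by blast
  show "bregman h a c = ereal (real_of_ereal (h a) - real_of_ereal (h c) - inner (egrad h c) (a - c))"
    unfolding bregman_def using a c edom_fin[OF pr a] edom_fin[OF pr c']
    by (metis ereal_minus(1))
  show "0 \<le> real_of_ereal (h a) - real_of_ereal (h c) - inner (egrad h c) (a - c)"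
    using grad_ineq[OF pr cv c' egrad_gderiv[OF sm c] a] by simp
qed

lemma econj_ind:
  fixes C :: "'a::real_inner set"
  assumes "cone C" "C \<noteq> {}"
  shows "econj (eindicator (uminus ` C)) y = (if y \<in> dual_cone C then 0 else \<infinity>)"
proof -
  have C0: "0 \<in> C" using assms unfolding cone_def by (metis all_not_in_conv order_refl scale_zero_left)
  show ?thesis
  proof (cases "y \<in> dual_cone C")
    case True
    have "econj (eindicator (uminus ` C)) y = 0"
      unfolding econj_def
    proof (rule antisym)
      show "(SUP x. ereal (inner x y) - eindicator (uminus ` C) x) \<le> 0"
      proof (rule SUP_least)
        fix x
        show "ereal (inner x y) - eindicator (uminus ` C) x \<le> 0"
        proof (cases "x \<in> uminus ` C")
          case True
          then obtain c where "c \<in> C" "x = - c" by blast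
          with \<open>y \<in> dual_cone C\<close> have "inner x y \<le> 0"
            unfolding dual_cone_def by (auto simp: inner_commute)
          then show ?thesis using True by (simp add: eindicator_def)
        qed (simp add: eindicator_def)
      qed
      have "ereal (inner 0 y) - eindicator (uminus ` C) 0 \<le> (SUP x. ereal (inner x y) - eindicator (uminus ` C) x)"
        by (rule SUP_upper) simp
      moreover have "ereal (inner 0 y) - eindicator (uminus ` C) 0 = 0"
        using C0 by (simp add: eindicator_def image_iff)
      ultimately show "0 \<le> (SUP x. ereal (inner x y) - eindicator (uminus ` C) x)" by simp
    qed
    then show ?thesis using True by simp
  next
    case False
    then obtain c where c: "c \<in> C" "inner y c < 0" unfolding dual_cone_def by (auto simp: not_le)
    have "(SUP x. ereal (inner x y) - eindicator (uminus ` C) x) = \<infinity>"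
    proof (rule SUP_PInfty)
      fix n :: nat
      define t where "t = (real n + 1) / (- inner y c)"
      have t: "t \<ge> 0" using c unfolding t_def by (simp add: divide_simps)
      have mem: "- (t *\<^sub>R c) \<in> uminus ` C" using assms(1) c t unfolding cone_def by blast
      have "inner (- (t *\<^sub>R c)) y = real n + 1" using c unfolding t_def
        by (simp add: inner_commute)
      then have "ereal (real n) < ereal (inner (- (t *\<^sub>R c)) y) - eindicator (uminus ` C) (- (t *\<^sub>R c))"
        using mem by (simp add: eindicator_def)
      then show "\<exists>i\<in>UNIV. ereal (real n) \<le> ereal (inner i y) - eindicator (uminus ` C) i"
        by (intro bexI[of _ "- (t *\<^sub>R c)"]) auto
    qed
    then show ?thesis using False unfolding econj_def by simp
  qed
qed



lemma dist_dual:
  fixes C :: "'a::euclidean_space set"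
  assumes "closed C" "convex C" "cone C" "C \<noteq> {}"
  shows "\<exists>w1\<in>dual_cone C. norm w1 \<le> 1 \<and> infdist d (uminus ` C) \<le> inner d w1"
proof -
  let ?M = "uminus ` C"
  have M: "closed ?M" "convex ?M" "?M \<noteq> {}"
    using assms closed_negations[of C] convex_negations[of C] by auto
  define p where "p = closest_point ?M d"
  have pM: "p \<in> ?M" using closest_point_in_set[OF M(1) M(3)] p_def by simp
  have dot: "inner (d - p) (z - p) \<le> 0" if "z \<in> ?M" for z
    using closest_point_dot[OF M(2) M(1) that] p_def by simp
  have coneM: "t *\<^sub>R z \<in> ?M" if zt: "z \<in> ?M" "t \<ge> 0" for z t
  proof -
    obtain c where "c \<in> C" "z = - c" using zt by blast
    then have "t *\<^sub>R c \<in> C" using assms(3) zt unfolding cone_def by blast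
    then show ?thesis using \<open>z = - c\<close> by (intro image_eqI[of _ _ "t *\<^sub>R c"]) auto
  qed
  have "inner (d - p) (0 - p) \<le> 0" using dot[of 0] coneM[OF pM, of 0] by simp
  moreover have "inner (d - p) (2 *\<^sub>R p - p) \<le> 0" using dot[of "2 *\<^sub>R p"] coneM[OF pM, of 2] by simp
  ultimately have dp0: "inner (d - p) p = 0" by (simp add: inner_diff_right algebra_simps)
  have pos: "inner (d - p) c \<ge> 0" if "c \<in> C" for c
  proof -
    have "inner (d - p) (- c - p) \<le> 0" using dot[of "- c"] that by blast
    then show ?thesis using dp0 by (simp add: inner_diff_right)
  qed
  define w1 where "w1 = (1 / norm (d - p)) *\<^sub>R (d - p)"
  have "w1 \<in> dual_cone C" unfolding dual_cone_def w1_def using pos by (auto simp: inner_commute)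
  moreover have "norm w1 \<le> 1" unfolding w1_def by (simp add: divide_simps)
  moreover have "inner d w1 = norm (d - p)"
  proof -
    have "inner d (d - p) = inner (d - p) (d - p)" using dp0 by (simp add: inner_diff algebra_simps inner_commute)
    then show ?thesis unfolding w1_def
      by (cases "d = p") (auto simp: power2_norm_eq_inner[symmetric] power2_eq_square)
  qed
  moreover have "infdist d ?M \<le> norm (d - p)" using infdist_le[OF pM, of d] by (simp add: dist_norm)
  ultimately show ?thesis by auto
qed

lemma final_ereal:
  fixes X a d S :: real and T :: ereal
  assumes "S > 0" "S * X \<le> a + d" "ereal d \<le> T"
  shows "ereal X \<le> (ereal a + T) / ereal S"
proof -
  have "X \<le> (a + d) / S" using assms by (simp add: divide_simps mult.commute)
  then have "ereal X \<le> ereal (a + d) / ereal S" using assms by simp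
  also have "\<dots> \<le> (ereal a + T) / ereal S"
    using assms by (intro ereal_divide_right_mono) (auto intro: add_left_mono simp del: plus_ereal.simps simp: plus_ereal.simps(1)[symmetric])
  finally show ?thesis .
qed

lemma jensen_e:
  fixes f :: "'a::real_vector \<Rightarrow> ereal"
  assumes cv: "econvex f" and pr: "eproper f" and I: "finite I" and l1: "(\<Sum>i\<in>I. l i) = 1"
    and l0: "\<And>i. i \<in> I \<Longrightarrow> l i \<ge> 0" and fin: "\<And>i. i \<in> I \<Longrightarrow> f (z i) \<noteq> \<infinity>"
  shows "f (\<Sum>i\<in>I. l i *\<^sub>R z i) \<le> ereal (\<Sum>i\<in>I. l i * real_of_ereal (f (z i)))"
proof -
  have E: "convex {(x, t::real). f x \<le> ereal t}" using cv unfolding econvex_def .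
  have "(\<Sum>i\<in>I. l i *\<^sub>R (z i, real_of_ereal (f (z i)))) \<in> {(x, t::real). f x \<le> ereal t}"
  proof (rule convex_sum[OF I E l1 l0])
    fix i assume "i \<in> I"
    then have "f (z i) = ereal (real_of_ereal (f (z i)))" using fin[of i] pr unfolding eproper_def
      by (cases "f (z i)") auto
    then show "(z i, real_of_ereal (f (z i))) \<in> {(x, t). f x \<le> ereal t}" by simp
  qed simp
  moreover have "(\<Sum>i\<in>I. l i *\<^sub>R (z i, real_of_ereal (f (z i))))
      = ((\<Sum>i\<in>I. l i *\<^sub>R z i), (\<Sum>i\<in>I. l i * real_of_ereal (f (z i))))"
    by (simp add: prod_eq_iff fst_sum snd_sum)
  ultimately show ?thesis by simp
qed

lemma inner_mat: "inner ((A::real^'n^'m) *v x) w = inner x (transpose A *v w)"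
  by (metis dot_lmul_matrix inner_commute transpose_matrix_vector)



theorem mainTheorem17:
  fixes f :: "real^'n \<Rightarrow> ereal" and psi :: "real^'n \<Rightarrow> ereal"
    and phi :: "real^'m \<Rightarrow> ereal"
    and A :: "real^'n^'m" and b :: "real^'m" and C :: "(real^'m) set"
    and sigma rho :: "nat \<Rightarrow> real" and sig :: real
    and s x v :: "nat \<Rightarrow> real^'n" and y u :: "nat \<Rightarrow> real^'m"
    and xs :: "real^'n" and ys :: "real^'m"
  assumes f: "Gamma0 f"
    and C: "closed C" "convex C" "cone C" "C \<noteq> {}"
    and Cdual: "dual_cone C \<subseteq> edom phi"
    and psi: "Legendre psi" and phi: "Legendre phi"
    and domT: "\<exists>x0 y0. x0 \<in> interior (edom psi) \<and> y0 \<in> interior (edom phi) \<and>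
                      kkt f (eindicator (uminus ` C)) A b x0 y0 \<noteq> {}"
    and x0: "x 0 \<in> interior (edom psi)" and y0: "y 0 \<in> interior (edom phi)"
    and sig: "sig > 0" "\<And>k. sigma k \<ge> sig"
    and rho: "\<And>k. 0 \<le> rho k \<and> rho k < 1"
    and s_dom: "\<And>k. s k \<in> edom psi"
    and vu: "\<And>k. (v k, u k) \<in> kkt f (eindicator (uminus ` C)) A b (s k) (y (Suc k))"
    and xupd: "\<And>k. x (Suc k) \<in> interior (edom psi) \<and>
                    egrad psi (x (Suc k)) = egrad psi (x k) - sigma k *\<^sub>R v k"
    and yupd: "\<And>k. y (Suc k) \<in> interior (edom phi) \<and>
                    egrad phi (y (Suc k)) = egrad phi (y k) - sigma k *\<^sub>R u k"
    and inexact: "\<And>k. bregman psi (s k) (x (Suc k))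
                     \<le> ereal (rho k) * (bregman psi (s k) (x k) + bregman phi (y (Suc k)) (y k))"
    and saddle: "saddle_point f (eindicator (uminus ` C)) A b xs ys"
    and xs_dom: "xs \<in> edom psi" and ys_dom: "ys \<in> edom phi"
  shows "\<forall>K. let S = (\<Sum>k\<le>K. sigma k);
               sK = (1 / S) *\<^sub>R (\<Sum>k\<le>K. sigma k *\<^sub>R s k);
               R = 2 * norm ys + 1
           in max \<bar>f sK - f xs\<bar> (ereal (infdist (A *v sK - b) (uminus ` C)))
              \<le> (bregman psi xs (x 0)
                  + (SUP w\<in>dual_cone C \<inter> cball 0 R. bregman phi w (y 0))) / ereal S"
proof -
  define g where "g = eindicator (uminus ` C :: (real^'m) set)"
  have gs: "econj g w = (if w \<in> dual_cone C then 0 else \<infinity>)" for w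
    unfolding g_def using econj_ind[OF C(3) C(4)] .
  define fr where "fr = (\<lambda>z. real_of_ereal (f z))"
  have fpr: "eproper f" and fcv: "econvex f" using f unfolding Gamma0_def by auto
  have fnm: "f z \<noteq> -\<infinity>" for z using fpr unfolding eproper_def by auto
  have sd: "\<And>w. lagr f g A b xs w \<le> lagr f g A b xs ys" "\<And>z. lagr f g A b xs ys \<le> lagr f g A b z ys"
    using saddle unfolding saddle_point_def g_def by auto
  have fxs_fin: "f xs \<noteq> \<infinity>"
  proof
    assume inf: "f xs = \<infinity>"
    obtain z where z: "f z < \<infinity>" using fpr unfolding eproper_def by auto
    have "lagr f g A b xs ys = \<infinity>" using inf unfolding lagr_def by simp
    moreover have "lagr f g A b z ys \<noteq> \<infinity>" using z fnm[of z]
      by (cases "f z") (auto simp: lagr_def gs)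
    ultimately show False using sd(2)[of z] by simp
  qed
  then have fxs: "f xs = ereal (fr xs)" using fnm[of xs] by (cases "f xs") (auto simp: fr_def)
  have C0: "0 \<in> dual_cone C" by (simp add: dual_cone_def)
  have ysC: "ys \<in> dual_cone C"
  proof (rule ccontr)
    assume "ys \<notin> dual_cone C"
    then have "lagr f g A b xs ys = -\<infinity>" by (simp add: lagr_def gs fxs)
    moreover have "lagr f g A b xs 0 = ereal (fr xs)" by (simp add: lagr_def gs fxs C0)
    ultimately show False using sd(1)[of 0] by simp
  qed
  have Lxs: "lagr f g A b xs w = ereal (fr xs + inner (A *v xs - b) w)" if "w \<in> dual_cone C" for w
    using that by (simp add: lagr_def gs fxs)
  have ysnn: "0 \<le> inner (A *v xs - b) ys" using sd(1)[of 0] Lxs[OF C0] Lxs[OF ysC] by simp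
  have feas: "inner (A *v xs - b) c \<le> 0" if cC: "c \<in> dual_cone C" for c
  proof (rule ccontr)
    assume "\<not> ?thesis" then have pos: "inner (A *v xs - b) c > 0" by simp
    define t where "t = (inner (A *v xs - b) ys + 1) / inner (A *v xs - b) c"
    have t0: "t \<ge> 0" using pos ysnn t_def by simp
    have tc: "t *\<^sub>R c \<in> dual_cone C" using cC t0 by (auto simp: dual_cone_def)
    have "inner (A *v xs - b) (t *\<^sub>R c) = inner (A *v xs - b) ys + 1" using pos t_def by simp
    then show False using sd(1)[of "t *\<^sub>R c"] Lxs[OF tc] Lxs[OF ysC] by simp
  qed
  have sadx: "fr xs + inner (A *v xs - b) ys \<le> fr z + inner (A *v z - b) ys" if "f z \<noteq> \<infinity>" for z
    using sd(2)[of z] Lxs[OF ysC] that fnm[of z] by (cases "f z") (auto simp: lagr_def gs ysC fr_def)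
  define Dx where "Dx = (\<lambda>a c. real_of_ereal (psi a) - real_of_ereal (psi c) - inner (egrad psi c) (a - c))"
  define Dy where "Dy = (\<lambda>a c. real_of_ereal (phi a) - real_of_ereal (phi c) - inner (egrad phi c) (a - c))"
  have bx: "bregman psi a c = ereal (Dx a c)" "0 \<le> Dx a c"
    if "a \<in> edom psi" "c \<in> interior (edom psi)" for a c
    using bregman_eq[OF psi that] unfolding Dx_def by auto
  have by': "bregman phi a c = ereal (Dy a c)" "0 \<le> Dy a c"
    if "a \<in> edom phi" "c \<in> interior (edom phi)" for a c
    using bregman_eq[OF phi that] unfolding Dy_def by auto
  have xint: "x k \<in> interior (edom psi)" for k by (cases k) (use x0 xupd in auto)
  have yint: "y k \<in> interior (edom phi)" for k by (cases k) (use y0 yupd in auto)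
  have fs: "f (s k) = ereal (fr (s k))" for k
  proof -
    obtain p q where "p \<in> esubdiff f (s k)"
      using vu[of k] unfolding kkt_def by blast
    then show ?thesis unfolding esubdiff_def fr_def by (cases "f (s k)") auto
  qed
  have sig0: "sigma k > 0" for k using sig(1) sig(2)[of k] by linarith
  have step: "sigma k * (fr (s k) - fr xs + inner (A *v s k - b) w)
     \<le> Dx xs (x k) - Dx xs (x (Suc k)) + Dy w (y k) - Dy w (y (Suc k))" if w: "w \<in> dual_cone C" for k w
  proof -
    obtain p q where v: "v k = p + transpose A *v y (Suc k)" and u: "u k = q + b - A *v s k"
      and p: "p \<in> esubdiff f (s k)" and q: "q \<in> esubdiff (econj g) (y (Suc k))"
      using vu[of k] unfolding kkt_def g_def by blast
    have ysk: "y (Suc k) \<in> dual_cone C" using q unfolding esubdiff_def gs by (auto split: if_splits)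
    have pin: "fr (s k) - fr xs \<le> inner p (s k - xs)"
    proof -
      have "f xs \<ge> f (s k) + ereal (inner p (xs - s k))" using p unfolding esubdiff_def by blast
      then have "fr xs \<ge> fr (s k) + inner p (xs - s k)" by (simp add: fxs fs)
      then show ?thesis by (simp add: inner_diff_right)
    qed
    have qin: "0 \<le> inner q (y (Suc k) - w)"
    proof -
      have "econj g w \<ge> econj g (y (Suc k)) + ereal (inner q (w - y (Suc k)))"
        using q unfolding esubdiff_def by blast
      then have "0 \<ge> inner q (w - y (Suc k))" using w ysk by (simp add: gs)
      then show ?thesis by (simp add: inner_diff_right)
    qed
    have e1: "inner (transpose A *v y (Suc k)) (s k - xs) = inner (A *v s k - b) (y (Suc k)) - inner (A *v xs - b) (y (Suc k))"
    proof -
      have "inner (transpose A *v y (Suc k)) (s k - xs) = inner (A *v (s k - xs)) (y (Suc k))"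
        by (metis inner_mat inner_commute)
      then show ?thesis by (simp add: matrix_vector_mult_diff_distrib inner_diff_left)
    qed
    have e2: "inner (u k) (y (Suc k) - w) = inner q (y (Suc k) - w) - inner (A *v s k - b) (y (Suc k)) + inner (A *v s k - b) w"
      unfolding u by (simp add: inner_diff_left inner_diff_right inner_add_left algebra_simps)
    have lower: "fr (s k) - fr xs + inner (A *v s k - b) w \<le> inner (v k) (s k - xs) + inner (u k) (y (Suc k) - w)"
      using pin qin feas[OF ysk] e1 e2 unfolding v by (simp add: inner_add_left)
    have id1: "sigma k * inner (v k) (s k - xs) = Dx xs (x k) - Dx xs (x (Suc k)) + Dx (s k) (x (Suc k)) - Dx (s k) (x k)"
    proof -
      have gk: "egrad psi (x k) = egrad psi (x (Suc k)) + sigma k *\<^sub>R v k" using xupd[of k] by simp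
      show ?thesis unfolding Dx_def gk by (simp add: inner_diff_left inner_diff_right inner_add_left algebra_simps)
    qed
    have id2: "sigma k * inner (u k) (y (Suc k) - w) = Dy w (y k) - Dy w (y (Suc k)) - Dy (y (Suc k)) (y k)"
    proof -
      have gk: "egrad phi (y k) = egrad phi (y (Suc k)) + sigma k *\<^sub>R u k" using yupd[of k] by simp
      show ?thesis unfolding Dy_def gk by (simp add: inner_diff_left inner_diff_right inner_add_left algebra_simps)
    qed
    have yskd: "y (Suc k) \<in> edom phi" using ysk Cdual by blast
    have inex: "Dx (s k) (x (Suc k)) \<le> rho k * (Dx (s k) (x k) + Dy (y (Suc k)) (y k))"
      using inexact[of k] bx(1)[OF s_dom xint] by'(1)[OF yskd yint] by simp
    have nn: "0 \<le> Dx (s k) (x k) + Dy (y (Suc k)) (y k)"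
      using bx(2)[OF s_dom xint] by'(2)[OF yskd yint] by simp
    have "rho k * (Dx (s k) (x k) + Dy (y (Suc k)) (y k)) \<le> Dx (s k) (x k) + Dy (y (Suc k)) (y k)"
      using nn rho[of k] by (simp add: mult_left_le_one_le)
    then have neg: "Dx (s k) (x (Suc k)) - Dx (s k) (x k) - Dy (y (Suc k)) (y k) \<le> 0" using inex by simp
    have "sigma k * (fr (s k) - fr xs + inner (A *v s k - b) w)
        \<le> sigma k * (inner (v k) (s k - xs) + inner (u k) (y (Suc k) - w))"
      using lower sig0[of k] by (simp add: mult_left_mono)
    also have "\<dots> = Dx xs (x k) - Dx xs (x (Suc k)) + Dy w (y k) - Dy w (y (Suc k))
        + (Dx (s k) (x (Suc k)) - Dx (s k) (x k) - Dy (y (Suc k)) (y k))"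
      using id1 id2 by (simp add: distrib_left)
    finally show ?thesis using neg by linarith
  qed
  have sum_bound: "(\<Sum>k\<le>K. sigma k * (fr (s k) - fr xs + inner (A *v s k - b) w)) \<le> Dx xs (x 0) + Dy w (y 0)"
    if w: "w \<in> dual_cone C" for K w
  proof -
    have "(\<Sum>k\<le>K. sigma k * (fr (s k) - fr xs + inner (A *v s k - b) w))
        \<le> (\<Sum>k\<le>K. (Dx xs (x k) + Dy w (y k)) - (Dx xs (x (Suc k)) + Dy w (y (Suc k))))"
      by (rule sum_mono) (use step[OF w] in \<open>simp add: algebra_simps\<close>)
    also have "\<dots> = (Dx xs (x 0) + Dy w (y 0)) - (Dx xs (x (Suc K)) + Dy w (y (Suc K)))"
      by (rule sum_telescope)
    also have "\<dots> \<le> Dx xs (x 0) + Dy w (y 0)"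
      using bx(2)[OF xs_dom xint, of "Suc K"] by'(2)[OF _ yint, of w "Suc K"] w Cdual by auto
    finally show ?thesis .
  qed
  show ?thesis
  proof
    fix K
    define S where "S = (\<Sum>k\<le>K. sigma k)"
    define sK where "sK = (1 / S) *\<^sub>R (\<Sum>k\<le>K. sigma k *\<^sub>R s k)"
    define R where "R = 2 * norm ys + 1"
    have "sigma 0 \<le> S" unfolding S_def by (rule member_le_sum) (use sig0 less_imp_le in auto)
    then have S0: "S > 0" using sig0[of 0] by linarith
    have sK': "sK = (\<Sum>k\<le>K. (sigma k / S) *\<^sub>R s k)" by (simp add: sK_def scaleR_sum_right)
    have l1: "(\<Sum>k\<le>K. sigma k / S) = 1" using S0 by (simp add: sum_divide_distrib[symmetric] S_def)
    have jen: "f sK \<le> ereal (\<Sum>k\<le>K. (sigma k / S) * fr (s k))"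
      unfolding sK' fr_def
      by (rule jensen_e[OF fcv fpr]) (use l1 sig0 S0 fs in \<open>auto intro: less_imp_le\<close>)
    then have fsK_fin: "f sK \<noteq> \<infinity>" by auto
    then have fsK: "f sK = ereal (fr sK)" using fnm[of sK] by (cases "f sK") (auto simp: fr_def)
    have fsKle: "fr sK \<le> (\<Sum>k\<le>K. (sigma k / S) * fr (s k))" using jen fsK by simp
    have key: "S * (fr sK - fr xs + inner (A *v sK - b) w) \<le> Dx xs (x 0) + Dy w (y 0)" if w: "w \<in> dual_cone C" for w
    proof -
      have e1: "(\<Sum>k\<le>K. sigma k * inner (A *v s k - b) w) = S * inner (A *v sK - b) w"
      proof -
        have "(\<Sum>k\<le>K. sigma k * inner (A *v s k - b) w)
            = inner (\<Sum>k\<le>K. sigma k *\<^sub>R s k) (transpose A *v w) - S * inner b w"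
          by (simp add: inner_diff_left inner_mat sum_subtractf right_diff_distrib inner_sum_left S_def sum_distrib_right)
        also have "(\<Sum>k\<le>K. sigma k *\<^sub>R s k) = S *\<^sub>R sK" using S0 by (simp add: sK_def)
        finally show ?thesis by (simp add: inner_diff_left inner_mat right_diff_distrib)
      qed
      have e2: "(\<Sum>k\<le>K. sigma k * fr (s k)) = S * (\<Sum>k\<le>K. (sigma k / S) * fr (s k))"
        using S0 by (simp add: sum_distrib_left)
      have e3: "(\<Sum>k\<le>K. sigma k * (fr (s k) - fr xs + inner (A *v s k - b) w))
          = (\<Sum>k\<le>K. sigma k * fr (s k)) - S * fr xs + (\<Sum>k\<le>K. sigma k * inner (A *v s k - b) w)"
        by (simp add: distrib_left right_diff_distrib sum.distrib sum_subtractf S_def sum_distrib_right)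
      have "S * fr sK \<le> S * (\<Sum>k\<le>K. (sigma k / S) * fr (s k))" using fsKle S0 by simp
      then show ?thesis using sum_bound[OF w, of K] e1 e2 e3 by (simp add: algebra_simps)
    qed
    define d where "d = A *v sK - b"
    define F where "F = fr sK - fr xs"
    define c where "c = inner d ys"
    have Fc: "F + c \<ge> 0" using sadx[OF fsK_fin] ysnn unfolding F_def c_def d_def by simp
    have inW: "w \<in> dual_cone C \<inter> cball 0 R \<Longrightarrow> bregman phi w (y 0) \<le> (SUP w\<in>dual_cone C \<inter> cball 0 R. bregman phi w (y 0))" for w
      by (rule SUP_upper)
    have bxs: "bregman psi xs (x 0) = ereal (Dx xs (x 0))" using bx(1)[OF xs_dom xint] .
    have byw: "bregman phi w (y 0) = ereal (Dy w (y 0))" if "w \<in> dual_cone C" for w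
      using by'(1)[OF _ yint] that Cdual by blast
    have R0: "norm ys \<le> R" "0 \<le> R" unfolding R_def by auto
    have W0: "0 \<in> dual_cone C \<inter> cball 0 R" using C0 R0 by simp
    have W2: "2 *\<^sub>R ys \<in> dual_cone C \<inter> cball 0 R" using ysC unfolding R_def
      by (auto simp: dual_cone_def)
    obtain w1 where w1: "w1 \<in> dual_cone C" "norm w1 \<le> 1" "infdist d (uminus ` C) \<le> inner d w1"
      using dist_dual[OF C] by blast
    have W3: "ys + w1 \<in> dual_cone C \<inter> cball 0 R"
    proof -
      have "ys + w1 \<in> dual_cone C" using ysC w1(1) by (auto simp: dual_cone_def inner_add_left)
      moreover have "norm (ys + w1) \<le> R" using norm_triangle_ineq[of ys w1] w1(2) norm_ge_zero[of ys] unfolding R_def by linarith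
      ultimately show ?thesis by simp
    qed
    have absF: "ereal \<bar>F\<bar> \<le> (bregman psi xs (x 0) + (SUP w\<in>dual_cone C \<inter> cball 0 R. bregman phi w (y 0))) / ereal S"
    proof (cases "F \<ge> 0")
      case True
      have "S * \<bar>F\<bar> \<le> Dx xs (x 0) + Dy 0 (y 0)" using key[OF C0] True unfolding F_def by simp
      then show ?thesis unfolding bxs using final_ereal[OF S0] inW[OF W0] byw[OF C0] by simp
    next
      case False
      have k2: "S * (F + 2 * c) \<le> Dx xs (x 0) + Dy (2 *\<^sub>R ys) (y 0)"
        using key[of "2 *\<^sub>R ys"] W2 unfolding F_def c_def d_def by simp
      have "S * \<bar>F\<bar> \<le> S * (F + 2 * c)" using False Fc S0 by (intro mult_left_mono) auto
      then have "S * \<bar>F\<bar> \<le> Dx xs (x 0) + Dy (2 *\<^sub>R ys) (y 0)" using k2 by linarith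
      then show ?thesis unfolding bxs using final_ereal[OF S0] inW[OF W2] byw W2 by simp
    qed
    have distb: "ereal (infdist d (uminus ` C)) \<le> (bregman psi xs (x 0) + (SUP w\<in>dual_cone C \<inter> cball 0 R. bregman phi w (y 0))) / ereal S"
    proof -
      have k3: "S * (F + c + inner d w1) \<le> Dx xs (x 0) + Dy (ys + w1) (y 0)"
        using key[of "ys + w1"] W3 unfolding F_def c_def d_def by (simp add: inner_add_right add.assoc)
      have "S * infdist d (uminus ` C) \<le> S * (F + c + inner d w1)" using Fc w1(3) S0 by (intro mult_left_mono) auto
      then have "S * infdist d (uminus ` C) \<le> Dx xs (x 0) + Dy (ys + w1) (y 0)" using k3 by linarith
      then show ?thesis unfolding bxs using final_ereal[OF S0] inW[OF W3] byw W3 by simp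
    qed
    have "\<bar>f sK - f xs\<bar> = ereal \<bar>F\<bar>" unfolding F_def fsK fxs by simp
    then have final: "max \<bar>f sK - f xs\<bar> (ereal (infdist (A *v sK - b) (uminus ` C)))
        \<le> (bregman psi xs (x 0) + (SUP w\<in>dual_cone C \<inter> cball 0 R. bregman phi w (y 0))) / ereal S"
      using absF distb unfolding d_def by simp
    show "let S = (\<Sum>k\<le>K. sigma k);
               sK = (1 / S) *\<^sub>R (\<Sum>k\<le>K. sigma k *\<^sub>R s k);
               R = 2 * norm ys + 1
           in max \<bar>f sK - f xs\<bar> (ereal (infdist (A *v sK - b) (uminus ` C)))
              \<le> (bregman psi xs (x 0)
                  + (SUP w\<in>dual_cone C \<inter> cball 0 R. bregman phi w (y 0))) / ereal S"
      using final unfolding Let_def S_def sK_def R_def .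
  qed
qed

end
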